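(* Let $b\ge2$, $k\in\mathbb{N}$, let $A$ be a nonempty subset of $\{0,1,\ldots,k\}$, and let $f\in\mathcal{M}^b$ have set-array representation $(A,\emptyset,\ldots,\emptyset)$. Then $d(f)\le d([k]_b)$, and the inequality is strict for $f\neq[k]_b$.
   Context: $\mathbb{N}=\{0,1,\ldots\}$, $[k]=\{0,\ldots,k\}$. $\mathcal{M}^b$ is the set of finitely supported functions $f:\mathbb{N}\to\{0,\ldots,b\}$ (finite multisets with multiplicities at most $b$); its set-array representation is $(A_1,\ldots,A_b)$ with $A_i=\{a:f(a)\ge i\}$. Multiset addition is coordinatewise on set arrays: $(A_i)_i+(B_i)_i=(A_i+B_i)_i$ with $S+T=\{s+t:s\in S,t\in T\}$ and $S+\emptyset=\emptyset$. $g$ is a divisor of $f$ if $f=g+h$ for some $h\in\mathcal{M}^b$; $d(f)$ is the number of divisors of $f$. $[k]_b$ is the multiset with set-array representation $([k],\emptyset,\ldots,\emptyset)$. *)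

theory Defs
  imports Main
begin

definition Mb :: "nat \<Rightarrow> (nat \<Rightarrow> nat) set" where
  "Mb b = {f. finite {a. f a \<noteq> 0} \<and> (\<forall>a. f a \<le> b)}"

text \<open>i-th component of the set-array representation (meaningful for 1 <= i <= b).\<close>
definition setarr :: "(nat \<Rightarrow> nat) \<Rightarrow> nat \<Rightarrow> nat set" where
  "setarr f i = {a. f a \<ge> i}"

definition sumset :: "nat set \<Rightarrow> nat set \<Rightarrow> nat set" where
  "sumset S T = {s + t | s t. s \<in> S \<and> t \<in> T}"

text \<open>f = g + h in M^b, addition coordinatewise on set arrays.\<close>
definition is_msum :: "nat \<Rightarrow> (nat \<Rightarrow> nat) \<Rightarrow> (nat \<Rightarrow> nat) \<Rightarrow> (nat \<Rightarrow> nat) \<Rightarrow> bool" where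
  "is_msum b f g h \<longleftrightarrow> (\<forall>i\<in>{1..b}. setarr f i = sumset (setarr g i) (setarr h i))"

definition divisor :: "nat \<Rightarrow> (nat \<Rightarrow> nat) \<Rightarrow> (nat \<Rightarrow> nat) \<Rightarrow> bool" where
  "divisor b g f \<longleftrightarrow> g \<in> Mb b \<and> (\<exists>h\<in>Mb b. is_msum b f g h)"

definition num_div :: "nat \<Rightarrow> (nat \<Rightarrow> nat) \<Rightarrow> nat" where
  "num_div b f = card {g. divisor b g f}"

definition intv_b :: "nat \<Rightarrow> nat \<Rightarrow> nat \<Rightarrow> nat" where
  "intv_b b k = (\<lambda>a. if a \<le> k then 1 else 0)"

end

theory Submission
  imports Defs "HOL-Library.FuncSet"
begin

definition Summ :: "nat set \<Rightarrow> nat set set" where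
  "Summ A = {S. \<exists>H. sumset S H = A}"

definition Dv :: "nat \<Rightarrow> nat set \<Rightarrow> nat" where
  "Dv b A = (\<Sum>S\<in>Summ A. b ^ card S)"

lemma sumset_iff: "x \<in> sumset S T \<longleftrightarrow> (\<exists>s\<in>S. \<exists>t\<in>T. x = s + t)"
  by (auto simp: sumset_def)

lemma sumset_commute: "sumset S T = sumset T S"
  unfolding sumset_def by (metis add.commute)

lemma sumset_empty2[simp]: "sumset S {} = {}" "sumset {} S = {}"
  by (auto simp: sumset_def)

lemma Summ_ne: "S \<in> Summ A \<Longrightarrow> A \<noteq> {} \<Longrightarrow> S \<noteq> {}"
  by (auto simp: Summ_def)

lemma Summ_sub:
  assumes "S \<in> Summ A" "A \<noteq> {}" "A \<subseteq> {..k}" shows "S \<subseteq> {..k}"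
proof
  fix s assume s: "s \<in> S"
  obtain H where H: "sumset S H = A" using assms(1) by (auto simp: Summ_def)
  then have "H \<noteq> {}" using assms(2) by auto
  then obtain h where "h \<in> H" by auto
  then have "s + h \<in> A" using H s sumset_iff[of "s+h" S H] by blast
  then show "s \<in> {..k}" using assms(3) by auto
qed

lemma finite_Summ: "A \<noteq> {} \<Longrightarrow> A \<subseteq> {..k} \<Longrightarrow> finite (Summ A)"
  by (rule finite_subset[of _ "Pow {..k}"]) (auto dest: Summ_sub)

lemma Summ_self: "A \<in> Summ A"
  unfolding Summ_def by (rule CollectI, rule exI[of _ "{0}"]) (auto simp: sumset_def)

lemma sum_inj_le:
  fixes w v :: "'a \<Rightarrow> nat"
  assumes "finite Y" "inj_on \<phi> X" "\<phi> ` X \<subseteq> Y" "\<And>x. x\<in>X \<Longrightarrow> w x \<le> v (\<phi> x)"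
  shows "sum w X \<le> sum v Y"
proof -
  have "sum w X \<le> sum (v \<circ> \<phi>) X" using assms(4) by (intro sum_mono) auto
  also have "\<dots> = sum v (\<phi> ` X)" using assms(2) by (simp add: sum.reindex)
  also have "\<dots> \<le> sum v Y" using assms(1,3) by (intro sum_mono2) auto
  finally show ?thesis .
qed

lemma sum_inj_less:
  fixes w v :: "'a \<Rightarrow> nat"
  assumes "finite Y" "inj_on \<phi> X" "\<phi> ` X \<subseteq> Y" "\<And>x. x\<in>X \<Longrightarrow> w x \<le> v (\<phi> x)"
    and "(\<exists>x\<in>X. w x < v (\<phi> x)) \<or> (\<exists>y\<in>Y - \<phi>`X. 0 < v y)"
  shows "sum w X < sum v Y"
proof -
  have fX: "finite X" using assms(1,2,3) finite_imageD finite_subset by blast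
  from assms(5) show ?thesis
  proof
    assume "\<exists>x\<in>X. w x < v (\<phi> x)"
    then have "sum w X < sum (v \<circ> \<phi>) X" using assms(4) fX
      by (intro sum_strict_mono_ex1) auto
    also have "\<dots> = sum v (\<phi> ` X)" using assms(2) by (simp add: sum.reindex)
    also have "\<dots> \<le> sum v Y" using assms(1,3) by (intro sum_mono2) auto
    finally show ?thesis .
  next
    assume "\<exists>y\<in>Y - \<phi>`X. 0 < v y"
    then obtain y where y: "y \<in> Y - \<phi>`X" "0 < v y" by auto
    have "sum w X \<le> sum (v \<circ> \<phi>) X" using assms(4) by (intro sum_mono) auto
    also have "\<dots> = sum v (\<phi> ` X)" using assms(2) by (simp add: sum.reindex)
    also have "\<dots> < sum v (\<phi> ` X) + sum v (Y - \<phi> ` X)"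
      using y assms(1) by (simp add: sum_pos2[of "Y - \<phi> ` X" y])
    also have "\<dots> = sum v Y" using assms(1,3) sum.subset_diff[of "\<phi> ` X" Y v] by simp
    finally show ?thesis .
  qed
qed

lemma Summ_Iic: "T \<noteq> {} \<Longrightarrow> sumset T {..k - Max T} = {..k} \<Longrightarrow> T \<in> Summ {..k}"
  unfolding Summ_def by blast

lemma zero_case:
  assumes A0: "0 \<in> A" and Ak: "A \<subseteq> {..k}" and b2: "b \<ge> 2"
  shows "Dv b A \<le> Dv b {..k} \<and> (A \<noteq> {..k} \<longrightarrow> Dv b A < Dv b {..k})"
proof -
  define \<tau> where "\<tau> S = S \<union> ({..Max S} - A)" for S
  have Ane: "A \<noteq> {}" using A0 by auto
  have SA: "S \<subseteq> A" if SS: "S \<in> Summ A" for S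
  proof -
    obtain H where H: "sumset S H = A" using SS by (auto simp: Summ_def)
    obtain s h where "s \<in> S" "h \<in> H" "0 = s + h" using A0 H sumset_iff[of 0 S H] by auto
    then have "0 \<in> H" by simp
    then show ?thesis using H sumset_iff by fastforce
  qed
  have fS: "finite S" "S \<noteq> {}" "Max S \<in> S" "Max S \<le> k" if "S \<in> Summ A" for S
  proof -
    show "finite S" using Summ_sub[OF that Ane Ak] finite_subset by blast
    moreover show "S \<noteq> {}" using Summ_ne[OF that Ane] .
    ultimately show "Max S \<in> S" by simp
    then show "Max S \<le> k" using SA[OF that] Ak by auto
  qed
  have tauS: "\<tau> S \<in> Summ {..k}" if S: "S \<in> Summ A" for S
  proof (rule Summ_Iic)
    note f = fS[OF S]
    obtain H where H: "sumset S H = A" using S by (auto simp: Summ_def)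
    have le: "t \<le> Max S" if "t \<in> \<tau> S" for t
      using that f(1) by (auto simp: \<tau>_def)
    have MT: "Max (\<tau> S) = Max S"
      using le f by (intro Max_eqI) (auto simp: \<tau>_def intro: finite_subset[of _ "{..Max S}"])
    show "\<tau> S \<noteq> {}" using f by (auto simp: \<tau>_def)
    show "sumset (\<tau> S) {..k - Max (\<tau> S)} = {..k}"
    proof
      show "sumset (\<tau> S) {..k - Max (\<tau> S)} \<subseteq> {..k}"
        using le f(4) MT by (fastforce simp: sumset_def)
      show "{..k} \<subseteq> sumset (\<tau> S) {..k - Max (\<tau> S)}"
      proof
        fix x assume x: "x \<in> {..k}"
        show "x \<in> sumset (\<tau> S) {..k - Max (\<tau> S)}"
        proof (cases "x \<in> A")
          case True
          then obtain s h where sh: "s \<in> S" "h \<in> H" "x = s + h" using H sumset_iff[of x S H] by auto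
          have "Max S + h \<in> A" using H sh f sumset_iff[of "Max S + h" S H] by blast
          then have "h \<le> k - Max S" using Ak by auto
          then show ?thesis using sh MT unfolding sumset_iff \<tau>_def by auto
        next
          case False
          show ?thesis
          proof (cases "x \<le> Max S")
            case True
            then have "x \<in> \<tau> S" using False by (auto simp: \<tau>_def)
            then show ?thesis unfolding sumset_iff by force
          next
            case c: False
            have "Max S \<in> \<tau> S" using f by (auto simp: \<tau>_def)
            moreover have "x - Max S \<in> {..k - Max (\<tau> S)}" using x MT by auto
            moreover have "x = Max S + (x - Max S)" using c by auto
            ultimately show ?thesis unfolding sumset_iff by blast
          qed
        qed
      qed
    qed
  qed
  have tauA: "\<tau> S \<inter> A = S" if "S \<in> Summ A" for S
    using SA[OF that] by (auto simp: \<tau>_def)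
  have inj: "inj_on \<tau> (Summ A)"
    by (metis inj_onI tauA)
  have fin: "finite (Summ {..k})" using finite_Summ[of "{..k}" k] by auto
  have wle: "b ^ card S \<le> b ^ card (\<tau> S)" if "S \<in> Summ A" for S
  proof -
    have "finite (\<tau> S)" using fS[OF that] by (auto simp: \<tau>_def)
    then have "card S \<le> card (\<tau> S)" by (intro card_mono) (auto simp: \<tau>_def)
    then show ?thesis using b2 by (intro power_increasing) auto
  qed
  have img: "\<tau> ` Summ A \<subseteq> Summ {..k}" using tauS by auto
  have part1: "Dv b A \<le> Dv b {..k}"
    unfolding Dv_def by (rule sum_inj_le[where w="\<lambda>S. b ^ card S" and v="\<lambda>S. b ^ card S", OF fin inj img wle])
  moreover have "Dv b A < Dv b {..k}" if ne: "A \<noteq> {..k}"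
    unfolding Dv_def
  proof (rule sum_inj_less[where w="\<lambda>S. b ^ card S" and v="\<lambda>S. b ^ card S", OF fin inj img wle])
    have AS: "A \<in> Summ A" by (rule Summ_self)
    have fA: "finite A" using Ak finite_subset by blast
    show "(\<exists>x\<in>Summ A. b ^ card x < b ^ card (\<tau> x)) \<or> (\<exists>y\<in>Summ {..k} - \<tau> ` Summ A. 0 < b ^ card y)"
    proof (cases "Max A = k")
      case True
      have "\<tau> A = {..k}" using True Ak by (auto simp: \<tau>_def)
      moreover have "card A < card {..k}" using Ak ne by (intro psubset_card_mono) auto
      ultimately have "b ^ card A < b ^ card (\<tau> A)" using b2 by (intro power_strict_increasing) auto
      then show ?thesis using AS by blast
    next
      case False
      have "Max A \<le> k" using fS[OF AS] by simp
      with False have MA: "Max A < k" by simp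
      have "{..k} \<in> Summ {..k}" by (rule Summ_self)
      moreover have "{..k} \<notin> \<tau> ` Summ A"
      proof
        assume "{..k} \<in> \<tau> ` Summ A"
        then obtain S where S: "S \<in> Summ A" "\<tau> S = {..k}" by auto
        have "Max S \<le> Max A" using SA[OF S(1)] fS[OF S(1)] fA by (intro Max_mono) auto
        moreover have "k \<in> \<tau> S" using S by auto
        moreover have "t \<le> Max S" if "t \<in> \<tau> S" for t
          using that fS[OF S(1)] by (auto simp: \<tau>_def)
        ultimately show False using MA by fastforce
      qed
      ultimately show ?thesis using b2 by auto
    qed
  qed
  ultimately show ?thesis by blast
qed

lemma step_lemma:
  assumes b1: "b \<ge> 1"
  shows "b * Dv b {..k} < Dv b {..Suc k}"
proof -
  define \<sigma> where "\<sigma> T = insert (Suc (Max T)) T" for T :: "nat set"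
  have f: "finite T" "T \<noteq> {}" "Max T \<le> k" if "T \<in> Summ {..k}" for T
  proof -
    show "finite T" using Summ_sub[OF that, of k] finite_subset by blast
    moreover show "T \<noteq> {}" using Summ_ne[OF that] by simp
    ultimately show "Max T \<le> k" using Summ_sub[OF that, of k] by auto
  qed
  have MS: "Max (\<sigma> T) = Suc (Max T)" if "T \<in> Summ {..k}" for T
    using f[OF that] by (auto simp: \<sigma>_def intro!: Max_eqI)
  have nin: "Suc (Max T) \<notin> T" if "T \<in> Summ {..k}" for T
    using f[OF that] Max_ge[of T "Suc (Max T)"] Suc_n_not_le_n by blast
  have inj: "inj_on \<sigma> (Summ {..k})"
  proof (rule inj_onI)
    fix T1 T2 assume T: "T1 \<in> Summ {..k}" "T2 \<in> Summ {..k}" and eq: "\<sigma> T1 = \<sigma> T2"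
    then have "Max T1 = Max T2" using MS by (metis Suc_inject)
    then show "T1 = T2" using eq nin[OF T(1)] nin[OF T(2)] unfolding \<sigma>_def
      by (metis Diff_insert_absorb)
  qed
  have img: "\<sigma> ` Summ {..k} \<subseteq> Summ {..Suc k}"
  proof
    fix U assume "U \<in> \<sigma> ` Summ {..k}"
    then obtain T where T: "T \<in> Summ {..k}" and U: "U = \<sigma> T" by auto
    obtain H where H: "sumset T H = {..k}" using T by (auto simp: Summ_def)
    note ff = f[OF T]
    have Hle: "h \<le> k - Max T" if "h \<in> H" for h
    proof -
      have "Max T + h \<in> {..k}" using H that ff Max_in sumset_iff[of "Max T + h" T H] by blast
      then show ?thesis by auto
    qed
    have le: "t \<le> Suc (Max T)" if "t \<in> \<sigma> T" for t
    proof (cases "t \<in> T")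
      case True
      then show ?thesis using ff(1) Max_ge[of T t] by linarith
    qed (use that in \<open>auto simp: \<sigma>_def\<close>)
    show "U \<in> Summ {..Suc k}"
    proof (rule Summ_Iic)
      show "U \<noteq> {}" using U by (auto simp: \<sigma>_def)
      show "sumset U {..Suc k - Max U} = {..Suc k}"
      proof
        show "sumset U {..Suc k - Max U} \<subseteq> {..Suc k}"
          using le ff(3) MS[OF T] U by (fastforce simp: sumset_def)
        show "{..Suc k} \<subseteq> sumset U {..Suc k - Max U}"
        proof
          fix x assume x: "x \<in> {..Suc k}"
          show "x \<in> sumset U {..Suc k - Max U}"
          proof (cases "x \<le> k")
            case True
            then obtain t h where th: "t \<in> T" "h \<in> H" "x = t + h" using H sumset_iff[of x T H] by auto
            then have "h \<in> {..Suc k - Max U}" using Hle MS[OF T] U by fastforce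
            moreover have "t \<in> U" using th U by (auto simp: \<sigma>_def)
            ultimately show ?thesis using th unfolding sumset_iff by blast
          next
            case False
            then have "x = Suc (Max T) + (k - Max T)" using x ff by auto
            moreover have "Suc (Max T) \<in> U" using U by (auto simp: \<sigma>_def)
            moreover have "k - Max T \<in> {..Suc k - Max U}" using MS[OF T] U by auto
            ultimately show ?thesis unfolding sumset_iff by blast
          qed
        qed
      qed
    qed
  qed
  have wle: "b * b ^ card T \<le> b ^ card (\<sigma> T)" if "T \<in> Summ {..k}" for T
    using nin[OF that] f[OF that] by (simp add: \<sigma>_def)
  have fin: "finite (Summ {..Suc k})" using finite_Summ[of "{..Suc k}" "Suc k"] by auto
  have z: "{0} \<in> Summ {..Suc k}"
    unfolding Summ_def by (rule CollectI, rule exI[of _ "{..Suc k}"]) (auto simp: sumset_def)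
  have zn: "{0} \<notin> \<sigma> ` Summ {..k}"
    by (auto simp: \<sigma>_def)
  have "(\<Sum>T\<in>Summ {..k}. b * b ^ card T) < (\<Sum>T\<in>Summ {..Suc k}. b ^ card T)"
    by (rule sum_inj_less[where w="\<lambda>T. b * b ^ card T" and v="\<lambda>S. b ^ card S", OF fin inj img wle])
      (use z zn b1 in auto)
  then show ?thesis by (simp add: Dv_def sum_distrib_left)
qed

lemma sumset_Suc1: "sumset (Suc ` S) H = Suc ` sumset S H"
proof
  show "sumset (Suc ` S) H \<subseteq> Suc ` sumset S H"
  proof
    fix x assume "x \<in> sumset (Suc ` S) H"
    then obtain s h where "s \<in> S" "h \<in> H" "x = Suc s + h" by (auto simp: sumset_def)
    then have "s + h \<in> sumset S H" "x = Suc (s + h)" by (auto simp: sumset_def)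
    then show "x \<in> Suc ` sumset S H" by blast
  qed
  show "Suc ` sumset S H \<subseteq> sumset (Suc ` S) H"
  proof
    fix x assume "x \<in> Suc ` sumset S H"
    then obtain s h where "s \<in> S" "h \<in> H" "x = Suc (s + h)" by (auto simp: sumset_def)
    then have "Suc s \<in> Suc ` S" "x = Suc s + h" by auto
    then show "x \<in> sumset (Suc ` S) H" using \<open>h \<in> H\<close> sumset_iff[of x "Suc ` S" H] by blast
  qed
qed

lemma sumset_Suc2: "sumset S (Suc ` H) = Suc ` sumset S H"
  using sumset_Suc1[of H S] sumset_commute by metis

lemma shift_eq: "0 \<notin> X \<Longrightarrow> X = Suc ` ((\<lambda>x. x - 1) ` X)"
proof -
  assume "0 \<notin> X"
  then have "x = Suc (x - 1)" if "x \<in> X" for x using that by (cases x) auto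
  then have "X = (\<lambda>x. Suc (x - 1)) ` X" by force
  then show ?thesis by (simp add: image_image)
qed

lemma shift_lemma:
  assumes A0: "0 \<notin> A" and Ane: "A \<noteq> {}" and Ak: "A \<subseteq> {..Suc k}"
  defines "A' \<equiv> (\<lambda>x. x - 1) ` A"
  shows "A' \<noteq> {}" "A' \<subseteq> {..k}" "Dv b A \<le> 2 * Dv b A'"
proof -
  show "A' \<noteq> {}" using Ane by (auto simp: A'_def)
  show A'k: "A' \<subseteq> {..k}" using Ak by (auto simp: A'_def)
  have AA: "A = Suc ` A'" using shift_eq[OF A0] by (simp add: A'_def)
  have sub: "Summ A \<subseteq> Summ A' \<union> (image Suc) ` Summ A'"
  proof
    fix S assume "S \<in> Summ A"
    then obtain H where H: "sumset S H = A" by (auto simp: Summ_def)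
    show "S \<in> Summ A' \<union> (image Suc) ` Summ A'"
    proof (cases "0 \<in> S")
      case True
      have "0 \<notin> H" using True H A0 sumset_iff[of 0 S H] by auto
      then have "H = Suc ` ((\<lambda>x. x - 1) ` H)" by (rule shift_eq)
      then have "Suc ` sumset S ((\<lambda>x. x - 1) ` H) = Suc ` A'"
        using H AA sumset_Suc2 by metis
      then have "sumset S ((\<lambda>x. x - 1) ` H) = A'" using inj_image_eq_iff[of Suc] by blast
      then show ?thesis by (auto simp: Summ_def)
    next
      case False
      then have SS: "S = Suc ` ((\<lambda>x. x - 1) ` S)" by (rule shift_eq)
      then have "Suc ` sumset ((\<lambda>x. x - 1) ` S) H = Suc ` A'"
        using H AA sumset_Suc1 by metis
      then have "sumset ((\<lambda>x. x - 1) ` S) H = A'" using inj_image_eq_iff[of Suc] by blast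
      then have "(\<lambda>x. x - 1) ` S \<in> Summ A'" by (auto simp: Summ_def)
      then show ?thesis using SS by blast
    qed
  qed
  have fin: "finite (Summ A')" using finite_Summ[OF \<open>A' \<noteq> {}\<close> A'k] .
  have "Dv b A \<le> (\<Sum>S\<in>Summ A' \<union> (image Suc) ` Summ A'. b ^ card S)"
    unfolding Dv_def using fin sub by (intro sum_mono2) auto
  also have "\<dots> \<le> (\<Sum>S\<in>Summ A'. b ^ card S) + (\<Sum>S\<in>(image Suc) ` Summ A'. b ^ card S)"
    using fin by (simp add: sum_Un_nat)
  also have "(\<Sum>S\<in>(image Suc) ` Summ A'. b ^ card S) = (\<Sum>S\<in>Summ A'. b ^ card (Suc ` S))"
    by (subst sum.reindex) (auto intro: inj_onI simp: inj_image_eq_iff)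
  also have "\<dots> = (\<Sum>S\<in>Summ A'. b ^ card S)"
    by (simp add: card_image)
  finally show "Dv b A \<le> 2 * Dv b A'" by (simp add: Dv_def)
qed

definition Wb :: "nat \<Rightarrow> nat set \<Rightarrow> (nat \<Rightarrow> nat) set" where
  "Wb b S = {g. (\<forall>x. g x \<le> b) \<and> setarr g 1 = S}"

lemma Wb_eq: "Wb b S = (\<lambda>p x. if x \<in> S then p x else 0) ` (PiE S (\<lambda>_. {1..b}))"
proof
  show "Wb b S \<subseteq> (\<lambda>p x. if x \<in> S then p x else 0) ` (PiE S (\<lambda>_. {1..b}))"
  proof
    fix g assume g: "g \<in> Wb b S"
    have "restrict g S \<in> PiE S (\<lambda>_. {1..b})" using g by (auto simp: Wb_def setarr_def)
    moreover have "g = (\<lambda>x. if x \<in> S then restrict g S x else 0)"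
      using g by (auto simp: Wb_def setarr_def fun_eq_iff)
    ultimately show "g \<in> (\<lambda>p x. if x \<in> S then p x else 0) ` (PiE S (\<lambda>_. {1..b}))" by blast
  qed
  show "(\<lambda>p x. if x \<in> S then p x else 0) ` (PiE S (\<lambda>_. {1..b})) \<subseteq> Wb b S"
    by (auto simp: Wb_def setarr_def PiE_def Pi_def split: if_splits)
qed

lemma card_Wb: "finite S \<Longrightarrow> card (Wb b S) = b ^ card S"
  unfolding Wb_eq
proof (subst card_image)
  show "inj_on (\<lambda>p x. if x \<in> S then p x else 0) (PiE S (\<lambda>_. {1..b}))"
  proof (rule inj_onI)
    fix p q assume pq: "p \<in> PiE S (\<lambda>_. {1..b})" "q \<in> PiE S (\<lambda>_. {1..b})"
      and eq: "(\<lambda>x. if x \<in> S then p x else 0) = (\<lambda>x. if x \<in> S then q x else 0)"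
    show "p = q"
    proof (rule PiE_ext[OF pq])
      fix x assume "x \<in> S" then show "p x = q x" using fun_cong[OF eq, of x] by simp
    qed
  qed
qed (simp add: card_PiE)

lemma finite_Wb: "finite S \<Longrightarrow> finite (Wb b S)"
  unfolding Wb_eq by (intro finite_imageI finite_PiE) auto

lemma count_lemma:
  assumes b1: "b \<ge> 1" and fA: "\<forall>x. f x = (if x \<in> A then 1 else 0)"
    and Ane: "A \<noteq> {}" and Ak: "A \<subseteq> {..k}"
  shows "num_div b f = Dv b A"
proof -
  have sf1: "setarr f 1 = A" using fA by (auto simp: setarr_def)
  have sf2: "setarr f i = {}" if "i \<ge> 2" for i using fA that by (auto simp: setarr_def)
  have eq: "{g. divisor b g f} = (\<Union>S\<in>Summ A. Wb b S)"
  proof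
    show "{g. divisor b g f} \<subseteq> (\<Union>S\<in>Summ A. Wb b S)"
    proof
      fix g assume "g \<in> {g. divisor b g f}"
      then obtain h where g: "g \<in> Mb b" "h \<in> Mb b" "is_msum b f g h" by (auto simp: divisor_def)
      have "1 \<in> {1..b}" using b1 by auto
      then have "A = sumset (setarr g 1) (setarr h 1)" using g(3) sf1 by (auto simp: is_msum_def)
      then have "setarr g 1 \<in> Summ A" by (auto simp: Summ_def)
      moreover have "g \<in> Wb b (setarr g 1)" using g(1) by (auto simp: Wb_def Mb_def)
      ultimately show "g \<in> (\<Union>S\<in>Summ A. Wb b S)" by blast
    qed
    show "(\<Union>S\<in>Summ A. Wb b S) \<subseteq> {g. divisor b g f}"
    proof
      fix g assume "g \<in> (\<Union>S\<in>Summ A. Wb b S)"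
      then obtain S where S: "S \<in> Summ A" "g \<in> Wb b S" by auto
      obtain H where H: "sumset S H = A" using S(1) by (auto simp: Summ_def)
      have "H \<in> Summ A" using H sumset_commute by (auto simp: Summ_def)
      then have fH: "finite H" using Summ_sub[OF _ Ane Ak] finite_subset by blast
      have fS: "finite S" using Summ_sub[OF S(1) Ane Ak] finite_subset by blast
      define h where "h x = (if x \<in> H then 1 else (0::nat))" for x
      have sg: "setarr g 1 = S" using S(2) by (auto simp: Wb_def)
      have "{a. g a \<noteq> 0} = setarr g 1" by (auto simp: setarr_def)
      then have gM: "g \<in> Mb b" using S(2) fS sg by (auto simp: Mb_def Wb_def)
      have "{a. h a \<noteq> 0} = H" by (auto simp: h_def)
      then have hM: "h \<in> Mb b" using fH b1 by (auto simp: Mb_def h_def)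
      have sh1: "setarr h 1 = H" by (auto simp: setarr_def h_def)
      have sh2: "setarr h i = {}" if "i \<ge> 2" for i using that by (auto simp: setarr_def h_def)
      have "is_msum b f g h"
        unfolding is_msum_def
      proof
        fix i assume i: "i \<in> {1..b}"
        show "setarr f i = sumset (setarr g i) (setarr h i)"
        proof (cases "i = 1")
          case True then show ?thesis using sf1 sg sh1 H by simp
        next
          case False then have "i \<ge> 2" using i by auto
          then show ?thesis using sf2 sh2 by simp
        qed
      qed
      then show "g \<in> {g. divisor b g f}" using gM hM by (auto simp: divisor_def)
    qed
  qed
  have finS: "finite (Summ A)" by (rule finite_Summ[OF Ane Ak])
  have fS: "finite S" if "S \<in> Summ A" for S using Summ_sub[OF that Ane Ak] finite_subset by blast
  have "card (\<Union>S\<in>Summ A. Wb b S) = (\<Sum>S\<in>Summ A. card (Wb b S))"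
    by (rule card_UN_disjoint[OF finS]) (auto simp: finite_Wb fS, auto simp: Wb_def)
  also have "\<dots> = Dv b A" unfolding Dv_def by (rule sum.cong) (auto simp: card_Wb fS)
  finally show ?thesis unfolding num_div_def eq .
qed

lemma main_ind:
  assumes b2: "b \<ge> 2"
  shows "A \<noteq> {} \<Longrightarrow> A \<subseteq> {..k} \<Longrightarrow> Dv b A \<le> Dv b {..k} \<and> (A \<noteq> {..k} \<longrightarrow> Dv b A < Dv b {..k})"
proof (induction k arbitrary: A)
  case 0
  then have "0 \<in> A" by auto
  then show ?case using zero_case[OF _ 0(2) b2] by blast
next
  case (Suc k)
  show ?case
  proof (cases "0 \<in> A")
    case True
    then show ?thesis using zero_case[OF _ Suc(3) b2] by blast
  next
    case False
    note sh = shift_lemma[OF False Suc(2) Suc(3)]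
    have "Dv b A \<le> 2 * Dv b ((\<lambda>x. x - 1) ` A)" using sh(3) .
    also have "\<dots> \<le> 2 * Dv b {..k}" using Suc(1)[OF sh(1) sh(2)] by simp
    also have "\<dots> \<le> b * Dv b {..k}" using b2 by simp
    also have "\<dots> < Dv b {..Suc k}" using step_lemma b2 by simp
    finally show ?thesis by simp
  qed
qed

theorem mainTheorem13:
  fixes b k :: nat and A :: "nat set" and f :: "nat \<Rightarrow> nat"
  assumes "b \<ge> 2"
    and "A \<noteq> {}" and "A \<subseteq> {0..k}"
    and "f \<in> Mb b"
    and "setarr f 1 = A" and "\<forall>i\<in>{2..b}. setarr f i = {}"
  shows "num_div b f \<le> num_div b (intv_b b k)
       \<and> (f \<noteq> intv_b b k \<longrightarrow> num_div b f < num_div b (intv_b b k))"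
proof -
  have "2 \<in> {2..b}" using assms(1) by auto
  then have s2: "setarr f 2 = {}" using assms(6) by blast
  have fA: "\<forall>x. f x = (if x \<in> A then 1 else 0)"
  proof
    fix x
    have "f x < 2" using s2 unfolding setarr_def by (metis (mono_tags) empty_Collect_eq not_le)
    moreover have "x \<in> A \<longleftrightarrow> f x \<ge> 1" using assms(5) by (auto simp: setarr_def)
    ultimately show "f x = (if x \<in> A then 1 else 0)" by auto
  qed
  have Ak: "A \<subseteq> {..k}" using assms(3) by auto
  have b1: "b \<ge> 1" using assms(1) by simp
  have n1: "num_div b f = Dv b A" by (rule count_lemma[OF b1 fA assms(2) Ak])
  have n2: "num_div b (intv_b b k) = Dv b {..k}"
    by (rule count_lemma[OF b1 _ _ order_refl]) (auto simp: intv_b_def)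
  have ne: "f \<noteq> intv_b b k \<Longrightarrow> A \<noteq> {..k}"
    using fA by (auto simp: intv_b_def fun_eq_iff)
  show ?thesis using main_ind[OF assms(1) assms(2) Ak] n1 n2 ne by auto
qed

end
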